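(* Let $P$ be a knot projection on $S^2$ (possibly reducible), and let $P_B$ be the knot projection obtained from $P$ by applying the move $B$ at every crossing of $P$. Then $P_B$ is reduced.
   Context: A knot projection is a closed curve in $S^2$ that is the image of an immersion $S^1\to S^2$ whose only singularities are finitely many transverse double points (crossings), up to isotopy of $S^2$. A crossing $c$ is reducible if the four corners of $S^2\setminus P$ at $c$ do not lie in four pairwise distinct regions; $P$ is reduced if it has no reducible crossing. Move $B$ at a crossing $c$: choose an orientation of $P$; in a small disk around $c$, $P$ is drawn as two arcs, both traversed from left to right, crossing once (shadow of the braid generator $\sigma_1$ with the braid running horizontally); $B$ replaces this by two arcs with the same endpoints, both traversed left to right, crossing three times in succession (shadow of $\sigma_1^3$, forming two consecutive bigons), unchanged outside the disk. This is independent of the chosen orientation. *)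

theory Defs
  imports Main
begin

text \<open>Knot projections on S^2 are encoded as combinatorial maps (rotation systems):
  a finite set D of darts (half-edges), a rotation sigma (counterclockwise successor of a
  dart around its crossing; its orbits are the crossings) and a fixed-point-free involution
  alpha (the other end of the edge).  Regions of S^2 minus P are the orbits of the face
  permutation sigma o alpha; the corner between x and sigma x lies in the face orbit of sigma x.
  The curve runs straight through a crossing: from the outgoing dart d it reaches the dart
  alpha d and leaves through the opposite dart sigma^2 (alpha d).\<close>

definition orb :: "('a \<Rightarrow> 'a) \<Rightarrow> 'a \<Rightarrow> 'a set" where
  "orb f x = range (\<lambda>n. (f ^^ n) x)"

definition orbits :: "('a \<Rightarrow> 'a) \<Rightarrow> 'a set \<Rightarrow> 'a set set" where
  "orbits f D = orb f ` D"

definition traversal :: "('a \<Rightarrow> 'a) \<Rightarrow> ('a \<Rightarrow> 'a) \<Rightarrow> 'a \<Rightarrow> 'a" where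
  "traversal sigma alpha d = (sigma ^^ 2) (alpha d)"

text \<open>A knot projection with at least one crossing: connected 4-valent map on the sphere
  (Euler characteristic 2) whose straight-ahead traversal is a single closed curve
  (exactly two traversal orbits, one per direction).\<close>
definition knot_projection_map :: "'a set \<Rightarrow> ('a \<Rightarrow> 'a) \<Rightarrow> ('a \<Rightarrow> 'a) \<Rightarrow> bool" where
  "knot_projection_map D sigma alpha \<longleftrightarrow>
     finite D \<and> D \<noteq> {} \<and> bij_betw sigma D D \<and> bij_betw alpha D D \<and>
     (\<forall>d\<in>D. alpha (alpha d) = d \<and> alpha d \<noteq> d \<and>
             (sigma ^^ 4) d = d \<and> sigma d \<noteq> d \<and> (sigma ^^ 2) d \<noteq> d) \<and>
     (\<forall>d\<in>D. \<forall>e\<in>D. (d, e) \<in> ({(x, sigma x) | x. x \<in> D} \<union> {(x, alpha x) | x. x \<in> D})\<^sup>*) \<and>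
     int (card (orbits sigma D)) - int (card (orbits alpha D))
       + int (card (orbits (sigma \<circ> alpha) D)) = 2 \<and>
     card (orbits (traversal sigma alpha) D) = 2"

text \<open>Reduced: at every crossing the four corners lie in four pairwise distinct regions.\<close>
definition reduced_map :: "'a set \<Rightarrow> ('a \<Rightarrow> 'a) \<Rightarrow> ('a \<Rightarrow> 'a) \<Rightarrow> bool" where
  "reduced_map D sigma alpha \<longleftrightarrow>
     (\<forall>d\<in>D. \<forall>i<(4::nat). \<forall>j<(4::nat). i \<noteq> j \<longrightarrow>
        orb (sigma \<circ> alpha) ((sigma ^^ i) d) \<noteq> orb (sigma \<circ> alpha) ((sigma ^^ j) d))"

text \<open>Move B at every crossing, w.r.t. an orientation Or (the set of darts along which the
  oriented curve leaves a crossing; Or is one of the two traversal orbits).  At each crossing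
  the distinguished dart s is the outgoing dart whose ccw successor is incoming; with
  d0 = s, d1 = sigma s, d2 = sigma^2 s, d3 = sigma^3 s the crossing looks like
  TR = d0, TL = d1, BL = d2, BR = d3, both strands going left to right.  It is replaced by
  three crossings c1, c2, c3 (left to right), with darts (NE, NW, SW, SE):
  c1 = (Inr(s,0), Inl d1, Inl d2, Inr(s,1)), c2 = (Inr(s,2), Inr(s,3), Inr(s,4), Inr(s,5)),
  c3 = (Inl d0, Inr(s,6), Inr(s,7), Inl d3); new edges
  (s,0)-(s,3), (s,1)-(s,4), (s,2)-(s,6), (s,5)-(s,7).\<close>
definition B_darts :: "'a set \<Rightarrow> ('a \<Rightarrow> 'a) \<Rightarrow> 'a set \<Rightarrow> ('a + 'a \<times> nat) set" where
  "B_darts D sigma Or =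
     Inl ` D \<union> {Inr (s, k) | s k. s \<in> D \<and> s \<in> Or \<and> sigma s \<notin> Or \<and> k < 8}"

definition B_sigma :: "('a \<Rightarrow> 'a) \<Rightarrow> 'a set \<Rightarrow> ('a + 'a \<times> nat) \<Rightarrow> ('a + 'a \<times> nat)" where
  "B_sigma sigma Or x = (case x of
      Inl d \<Rightarrow>
        (if d \<in> Or then (if sigma d \<in> Or then Inl (sigma d) else Inr (d, 6))
         else (if sigma d \<in> Or then Inr ((sigma ^^ 2) d, 1) else Inl (sigma d)))
    | Inr (s, k) \<Rightarrow>
        (if k = 0 then Inl (sigma s)
         else if k = 1 then Inr (s, 0)
         else if k = 2 then Inr (s, 3)
         else if k = 3 then Inr (s, 4)
         else if k = 4 then Inr (s, 5)
         else if k = 5 then Inr (s, 2)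
         else if k = 6 then Inr (s, 7)
         else if k = 7 then Inl ((sigma ^^ 3) s)
         else Inr (s, k)))"

definition B_alpha :: "('a \<Rightarrow> 'a) \<Rightarrow> ('a + 'a \<times> nat) \<Rightarrow> ('a + 'a \<times> nat)" where
  "B_alpha alpha x = (case x of
      Inl d \<Rightarrow> Inl (alpha d)
    | Inr (s, k) \<Rightarrow> Inr (s,
        (if k = 0 then 3 else if k = 3 then 0
         else if k = 1 then 4 else if k = 4 then 1
         else if k = 2 then 6 else if k = 6 then 2
         else if k = 5 then 7 else if k = 7 then 5 else k)))"

end

theory Submission
  imports Defs
begin

definition perm_on :: "('a \<Rightarrow> 'a) \<Rightarrow> 'a set \<Rightarrow> bool" where
  "perm_on f D \<longleftrightarrow> finite D \<and> f ` D \<subseteq> D \<and> inj_on f D"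

lemma orb_self: "x \<in> orb f x"
  unfolding orb_def by (metis funpow_0 rangeI)

lemma orb_step: assumes "y \<in> orb f x" shows "f y \<in> orb f x"
proof -
  obtain n where "y = (f ^^ n) x" using assms unfolding orb_def by auto
  hence "f y = (f ^^ Suc n) x" by simp
  thus ?thesis unfolding orb_def by blast
qed

lemma orb_closed: assumes "x \<in> S" "\<And>y. y \<in> S \<Longrightarrow> f y \<in> S" shows "orb f x \<subseteq> S"
proof
  fix y assume "y \<in> orb f x"
  then obtain n where "y = (f ^^ n) x" unfolding orb_def by auto
  moreover have "(f ^^ n) x \<in> S" for n by (induction n) (auto simp: assms)
  ultimately show "y \<in> S" by simp
qed

lemma orb_trans: "y \<in> orb f x \<Longrightarrow> orb f y \<subseteq> orb f x"
  by (rule orb_closed) (auto intro: orb_step)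

lemma funpow_in: "perm_on f D \<Longrightarrow> x \<in> D \<Longrightarrow> (f ^^ n) x \<in> D"
  unfolding perm_on_def by (induction n) auto

lemma orb_sub: "perm_on f D \<Longrightarrow> x \<in> D \<Longrightarrow> orb f x \<subseteq> D"
  by (rule orb_closed) (auto simp: perm_on_def)

lemma perm_return:
  assumes p: "perm_on f D" and x: "x \<in> D" shows "\<exists>m>0. (f ^^ m) x = x"
proof -
  have fin: "finite D" using p by (simp add: perm_on_def)
  have "\<not> inj_on (\<lambda>n. (f ^^ n) x) {0..card D}"
  proof
    assume "inj_on (\<lambda>n. (f ^^ n) x) {0..card D}"
    moreover have "(\<lambda>n. (f ^^ n) x) ` {0..card D} \<subseteq> D" using funpow_in[OF p x] by auto
    ultimately have "card {0..card D} \<le> card D" using card_inj_on_le fin by blast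
    thus False by simp
  qed
  then obtain i j where ij: "i \<noteq> j" "(f ^^ i) x = (f ^^ j) x" unfolding inj_on_def by blast
  have key: "\<And>i k. (f ^^ i) x = (f ^^ (i + k)) x \<Longrightarrow> x = (f ^^ k) x"
  proof -
    fix i k assume "(f ^^ i) x = (f ^^ (i + k)) x"
    thus "x = (f ^^ k) x"
    proof (induction i)
      case 0 thus ?case by simp
    next
      case (Suc i)
      have "f ((f ^^ i) x) = f ((f ^^ (i + k)) x)" using Suc.prems by simp
      moreover have "(f ^^ i) x \<in> D" "(f ^^ (i + k)) x \<in> D" using funpow_in[OF p x] by auto
      ultimately have "(f ^^ i) x = (f ^^ (i + k)) x" using p unfolding perm_on_def inj_on_def by blast
      thus ?case using Suc.IH by simp
    qed
  qed
  have "\<exists>i k. k > 0 \<and> (f ^^ i) x = (f ^^ (i + k)) x"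
  proof (cases "i < j")
    case True
    hence "j = i + (j - i)" by simp
    thus ?thesis using ij True by (intro exI[of _ i] exI[of _ "j - i"]) simp
  next
    case False
    hence "i = j + (i - j)" by simp
    thus ?thesis using ij False by (intro exI[of _ j] exI[of _ "i - j"]) simp
  qed
  thus ?thesis using key by metis
qed

lemma funpow_mult_fix: "(f ^^ m) x = x \<Longrightarrow> (f ^^ (m * k)) x = x"
  by (induction k) (auto simp: funpow_add)

lemma orb_sym:
  assumes p: "perm_on f D" and x: "x \<in> D" and y: "y \<in> orb f x" shows "x \<in> orb f y"
proof -
  obtain n where n: "y = (f ^^ n) x" using y unfolding orb_def by auto
  obtain m where m: "m > 0" "(f ^^ m) x = x" using perm_return[OF p x] by auto
  have le: "m * (n + 1) \<ge> n" using m(1) by (simp add: add_mult_distrib2 trans_le_add2)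
  have "(f ^^ (m * (n + 1) - n)) y = (f ^^ (m * (n + 1) - n + n)) x"
    unfolding n funpow_add o_def ..
  also have "m * (n + 1) - n + n = m * (n + 1)" using le by simp
  also have "(f ^^ (m * (n + 1))) x = x" using funpow_mult_fix[OF m(2)] .
  finally show ?thesis unfolding orb_def by (metis rangeI)
qed

lemma orb_eq: "perm_on f D \<Longrightarrow> x \<in> D \<Longrightarrow> y \<in> orb f x \<Longrightarrow> orb f y = orb f x"
  by (meson orb_sym orb_trans subset_antisym)

lemma orb_disj: "perm_on f D \<Longrightarrow> x \<in> D \<Longrightarrow> y \<in> D \<Longrightarrow> z \<in> orb f x \<Longrightarrow> z \<in> orb f y \<Longrightarrow> orb f x = orb f y"
  by (metis orb_eq)

lemma orb_pre: "perm_on f D \<Longrightarrow> z \<in> D \<Longrightarrow> f z \<in> orb f y \<Longrightarrow> z \<in> orb f y"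
  by (meson orb_self orb_step orb_sym orb_trans subsetD)

lemma card_orbits_sum:
  assumes p: "perm_on f D" shows "card D = (\<Sum>Ob\<in>orbits f D. card Ob)"
proof -
  have fin: "finite D" using p by (simp add: perm_on_def)
  have U: "\<Union>(orbits f D) = D"
  proof
    show "\<Union>(orbits f D) \<subseteq> D" unfolding orbits_def using orb_sub[OF p] by auto
    show "D \<subseteq> \<Union>(orbits f D)" unfolding orbits_def using orb_self by fast
  qed
  have "card (\<Union>(orbits f D)) = (\<Sum>Ob\<in>orbits f D. card Ob)"
  proof (rule card_Union_disjoint)
    show "pairwise disjnt (orbits f D)" unfolding pairwise_def disjnt_def
    proof (intro ballI impI)
      fix X Y assume X: "X \<in> orbits f D" and Y: "Y \<in> orbits f D" and ne: "X \<noteq> Y"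
      obtain x where x: "x \<in> D" "X = orb f x" using X unfolding orbits_def by auto
      obtain y where y: "y \<in> D" "Y = orb f y" using Y unfolding orbits_def by auto
      show "X \<inter> Y = {}"
      proof (rule ccontr)
        assume "X \<inter> Y \<noteq> {}"
        then obtain z where "z \<in> orb f x" "z \<in> orb f y" using x y by auto
        hence "orb f x = orb f y" using orb_disj[OF p x(1) y(1)] by simp
        thus False using ne x y by simp
      qed
    qed
    fix A assume "A \<in> orbits f D"
    then obtain x where "x \<in> D" "A = orb f x" unfolding orbits_def by auto
    thus "finite A" using orb_sub[OF p] fin finite_subset by metis
  qed
  thus ?thesis using U by simp
qed

lemma orb_cong:
  assumes "\<And>y. y \<in> S \<Longrightarrow> f y = g y" "\<And>y. y \<in> S \<Longrightarrow> f y \<in> S" "x \<in> S"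
  shows "orb f x = orb g x"
proof -
  have "(f ^^ n) x = (g ^^ n) x \<and> (f ^^ n) x \<in> S" for n
    by (induction n) (auto simp: assms(3), metis assms(1,2), metis assms(1,2))
  thus ?thesis unfolding orb_def by auto
qed

lemma orbits_cong:
  assumes "\<And>y. y \<in> S \<Longrightarrow> f y = g y" "\<And>y. y \<in> S \<Longrightarrow> f y \<in> S"
  shows "orbits f S = orbits g S"
  unfolding orbits_def using orb_cong[OF assms] by (auto intro!: image_cong)

lemma perm_on_cong:
  assumes "perm_on f S" "\<And>y. y \<in> S \<Longrightarrow> f y = g y" shows "perm_on g S"
  using assms unfolding perm_on_def inj_on_def by auto

lemma const_on_orb:
  assumes "\<And>z. z \<in> S \<Longrightarrow> F (f z) = F z" "\<And>z. z \<in> S \<Longrightarrow> f z \<in> S" "y \<in> S" "w \<in> orb f y"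
  shows "F w = F y"
proof -
  have "orb f y \<subseteq> {w\<in>S. F w = F y}" by (rule orb_closed) (auto simp: assms)
  thus ?thesis using assms(4) by auto
qed

definition skip :: "('a \<Rightarrow> 'a) \<Rightarrow> 'a \<Rightarrow> 'a \<Rightarrow> 'a" where
  "skip f z y = (if f y = z then f z else f y)"

lemma skip_perm:
  assumes p: "perm_on f D" and z: "z \<in> D" shows "perm_on (skip f z) (D - {z})"
proof -
  have fin: "finite D" and m: "f ` D \<subseteq> D" and i: "inj_on f D" using p by (auto simp: perm_on_def)
  have "skip f z y \<in> D - {z}" if "y \<in> D - {z}" for y
    using that m z i unfolding skip_def inj_on_def by auto
  moreover have "inj_on (skip f z) (D - {z})"
    unfolding inj_on_def skip_def using i z unfolding inj_on_def by auto
  ultimately show ?thesis using fin by (auto simp: perm_on_def)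
qed

lemma skip_orb:
  assumes p: "perm_on f D" and z: "z \<in> D" and y: "y \<in> D" "y \<noteq> z"
  shows "orb (skip f z) y = orb f y - {z}"
proof
  have i: "inj_on f D" and m: "f ` D \<subseteq> D" using p by (auto simp: perm_on_def)
  show "orb (skip f z) y \<subseteq> orb f y - {z}"
  proof (rule orb_closed)
    show "y \<in> orb f y - {z}" using y orb_self by auto
    fix w assume w: "w \<in> orb f y - {z}"
    have wD: "w \<in> D" using w orb_sub[OF p y(1)] by auto
    show "skip f z w \<in> orb f y - {z}"
    proof (cases "f w = z")
      case True
      hence "z \<in> orb f y" using w orb_step by fastforce
      hence "f z \<in> orb f y" by (rule orb_step)
      moreover have "f z \<noteq> z" using True i wD z w unfolding inj_on_def by auto
      ultimately show ?thesis using True by (simp add: skip_def)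
    next
      case False thus ?thesis using w orb_step by (auto simp: skip_def)
    qed
  qed
  show "orb f y - {z} \<subseteq> orb (skip f z) y"
  proof
    fix v assume v: "v \<in> orb f y - {z}"
    then obtain n where n: "v = (f ^^ n) y" unfolding orb_def by auto
    have "((f ^^ n) y \<in> orb (skip f z) y \<or> (f ^^ n) y = z) \<and>
          ((f ^^ n) y = z \<longrightarrow> f z \<in> orb (skip f z) y)" for n
    proof (induction n)
      case 0 thus ?case using y orb_self by auto
    next
      case (Suc n)
      define w where "w = (f ^^ n) y"
      have fs: "(f ^^ Suc n) y = f w" by (simp add: w_def)
      show ?case
      proof (cases "w = z")
        case True thus ?thesis using Suc.IH fs unfolding w_def
          by (metis orb_step skip_def)
      next
        case False
        hence wo: "w \<in> orb (skip f z) y" using Suc.IH w_def by auto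
        show ?thesis
        proof (cases "f w = z")
          case True
          have "skip f z w = f z" using True by (simp add: skip_def)
          thus ?thesis using fs True orb_step[OF wo] by auto
        next
          case False
          have "skip f z w = f w" using False by (simp add: skip_def)
          thus ?thesis using fs False orb_step[OF wo] by auto
        qed
      qed
    qed
    thus "v \<in> orb (skip f z) y" using v n by auto
  qed
qed

lemma skip_orbits:
  assumes p: "perm_on f D" and z: "z \<in> D"
  shows "orbits (skip f z) (D - {z}) = (\<lambda>Ob. Ob - {z}) ` orb f ` (D - {z})"
proof -
  have "orb (skip f z) ` (D - {z}) = (\<lambda>y. orb f y - {z}) ` (D - {z})"
    by (rule image_cong) (auto simp: skip_orb[OF p z])
  thus ?thesis unfolding orbits_def by (simp add: image_image)
qed

lemma skip_card:
  assumes p: "perm_on f D" and z: "z \<in> D"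
  shows "card (orbits (skip f z) (D - {z})) =
           (if f z = z then card (orbits f D) - 1 else card (orbits f D))"
proof -
  have fin: "finite D" using p by (simp add: perm_on_def)
  have inj: "inj_on (\<lambda>Ob. Ob - {z}) (orb f ` (D - {z}))"
  proof (rule inj_onI)
    fix A B assume A: "A \<in> orb f ` (D - {z})" and B: "B \<in> orb f ` (D - {z})" and eq: "A - {z} = B - {z}"
    obtain a where a: "a \<in> D" "a \<noteq> z" "A = orb f a" using A by auto
    obtain b where b: "b \<in> D" "b \<noteq> z" "B = orb f b" using B by auto
    have "a \<in> A - {z}" using a orb_self by fast
    hence "a \<in> orb f b" using eq b by simp
    thus "A = B" using a b orb_eq[OF p b(1)] by simp
  qed
  have c1: "card (orbits (skip f z) (D - {z})) = card (orb f ` (D - {z}))"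
    using skip_orbits[OF p z] card_image[OF inj] by simp
  show ?thesis
  proof (cases "f z = z")
    case True
    have oz: "orb f z = {z}"
    proof
      show "orb f z \<subseteq> {z}" by (rule orb_closed) (auto simp: True)
    qed (simp add: orb_self)
    have "D = insert z (D - {z})" using z by blast
    hence "orbits f D = insert {z} (orb f ` (D - {z}))" unfolding orbits_def using oz
      by (metis image_insert)
    moreover have "{z} \<notin> orb f ` (D - {z})"
    proof
      assume "{z} \<in> orb f ` (D - {z})"
      then obtain a where "a \<in> D" "a \<noteq> z" "orb f a = {z}" by auto
      thus False using orb_self[of a f] by auto
    qed
    ultimately show ?thesis using c1 True fin by simp
  next
    case False
    have "f z \<in> D" "f z \<noteq> z" using p z False by (auto simp: perm_on_def)
    moreover have "orb f (f z) = orb f z" by (rule orb_eq[OF p z orb_step[OF orb_self]])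
    ultimately have "orb f z \<in> orb f ` (D - {z})" by (metis Diff_iff empty_iff image_eqI insertE)
    moreover have "D = insert z (D - {z})" using z by blast
    ultimately have "orbits f D = orb f ` (D - {z})" unfolding orbits_def
      by (metis image_insert insert_absorb)
    thus ?thesis using c1 False by simp
  qed
qed

definition mrg :: "('a \<Rightarrow> 'a) \<Rightarrow> 'a \<Rightarrow> 'a \<Rightarrow> 'a \<Rightarrow> 'a" where
  "mrg f a b y = (if y = a then f b else if y = b then f a else f y)"

context
  fixes f :: "'a \<Rightarrow> 'a" and D a b
  assumes p: "perm_on f D" and a: "a \<in> D" and b: "b \<in> D" and nb: "b \<notin> orb f a"
begin

lemma ab: "a \<noteq> b" using nb orb_self by metis

lemma a_notin_b: "a \<notin> orb f b"
  using nb orb_sym[OF p b] by blast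

lemma mrg_perm: "perm_on (mrg f a b) D"
proof -
  have fin: "finite D" and m: "f ` D \<subseteq> D" and i: "inj_on f D" using p by (auto simp: perm_on_def)
  have "mrg f a b ` D \<subseteq> D" using m a b by (auto simp: mrg_def)
  moreover have "inj_on (mrg f a b) D"
  proof (rule inj_onI)
    fix x y assume x: "x \<in> D" and y: "y \<in> D" and e: "mrg f a b x = mrg f a b y"
    show "x = y"
      using e x y a b ab i unfolding mrg_def inj_on_def by (auto split: if_splits)
  qed
  ultimately show ?thesis using fin by (simp add: perm_on_def)
qed

lemma mrg_orb_a: "orb (mrg f a b) a = orb f a \<union> orb f b"
proof
  show "orb (mrg f a b) a \<subseteq> orb f a \<union> orb f b"
  proof (rule orb_closed)
    show "a \<in> orb f a \<union> orb f b" using orb_self by fast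
    fix w assume w: "w \<in> orb f a \<union> orb f b"
    show "mrg f a b w \<in> orb f a \<union> orb f b"
    proof (cases "w = a")
      case True thus ?thesis using orb_step[OF orb_self, of f b] by (simp add: mrg_def)
    next
      case False
      show ?thesis
      proof (cases "w = b")
        case True thus ?thesis using False orb_step[OF orb_self, of f a] by (simp add: mrg_def)
      next
        case False2: False
        thus ?thesis using False w orb_step[of w f a] orb_step[of w f b] by (auto simp: mrg_def)
      qed
    qed
  qed
  let ?S = "orb (mrg f a b) a"
  have fb: "f b \<in> ?S"
  proof -
    have "mrg f a b a = f b" by (simp add: mrg_def)
    thus ?thesis using orb_step[OF orb_self, of "mrg f a b" a] by simp
  qed
  have c1: "(f ^^ Suc n) b \<in> ?S" for n
  proof (induction n)
    case 0 thus ?case using fb by simp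
  next
    case (Suc n)
    define w where "w = (f ^^ Suc n) b"
    have wS: "w \<in> ?S" using Suc.IH w_def by simp
    have wb: "w \<in> orb f b" unfolding w_def orb_def by blast
    hence wa: "w \<noteq> a" using a_notin_b by blast
    have "f w \<in> ?S"
    proof (cases "w = b")
      case True thus ?thesis using fb by simp
    next
      case False
      hence "mrg f a b w = f w" using wa by (simp add: mrg_def)
      thus ?thesis using orb_step[OF wS] by simp
    qed
    thus ?case by (simp add: w_def)
  qed
  have bS: "b \<in> ?S"
  proof -
    obtain m where m: "m > 0" "(f ^^ m) b = b" using perm_return[OF p b] by blast
    then obtain n where "m = Suc n" using not0_implies_Suc by blast
    thus ?thesis using c1[of n] m by simp
  qed
  have fa: "f a \<in> ?S"
  proof -
    have "mrg f a b b = f a" using ab by (simp add: mrg_def)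
    thus ?thesis using orb_step[OF bS] by simp
  qed
  have c2: "(f ^^ Suc n) a \<in> ?S" for n
  proof (induction n)
    case 0 thus ?case using fa by simp
  next
    case (Suc n)
    define w where "w = (f ^^ Suc n) a"
    have wS: "w \<in> ?S" using Suc.IH w_def by simp
    have wa: "w \<in> orb f a" unfolding w_def orb_def by blast
    hence wb: "w \<noteq> b" using nb by blast
    have "f w \<in> ?S"
    proof (cases "w = a")
      case True thus ?thesis using fa by simp
    next
      case False
      hence "mrg f a b w = f w" using wb by (simp add: mrg_def)
      thus ?thesis using orb_step[OF wS] by simp
    qed
    thus ?case by (simp add: w_def)
  qed
  show "orb f a \<union> orb f b \<subseteq> ?S"
  proof
    fix v assume "v \<in> orb f a \<union> orb f b"
    then obtain n where "v = (f ^^ n) a \<or> v = (f ^^ n) b" unfolding orb_def by blast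
    thus "v \<in> ?S" using c1 c2 bS orb_self[of a "mrg f a b"] by (cases n) auto
  qed
qed

lemma mrg_orb_out:
  assumes y: "y \<in> D" "y \<notin> orb f a \<union> orb f b" shows "orb (mrg f a b) y = orb f y"
proof -
  have "orb f y = orb (mrg f a b) y"
  proof (rule orb_cong)
    fix w assume w: "w \<in> orb f y"
    have "w \<noteq> a" using w y orb_sym[OF p y(1)] by blast
    moreover have "w \<noteq> b" using w y orb_sym[OF p y(1)] by blast
    ultimately show "f w = mrg f a b w" by (simp add: mrg_def)
    show "f w \<in> orb f y" using w by (rule orb_step)
  qed (rule orb_self)
  thus ?thesis by simp
qed

lemma mrg_orb_in:
  assumes y: "y \<in> orb f a \<union> orb f b" shows "orb (mrg f a b) y = orb f a \<union> orb f b"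
  using orb_eq[OF mrg_perm a] mrg_orb_a y by metis

lemma mrg_card: "card (orbits (mrg f a b) D) = card (orbits f D) - 1"
proof -
  let ?U = "orb f a \<union> orb f b"
  have fin: "finite D" using p by (simp add: perm_on_def)
  have eq: "orbits (mrg f a b) D = insert ?U (orbits f D - {orb f a, orb f b})"
  proof
    show "orbits (mrg f a b) D \<subseteq> insert ?U (orbits f D - {orb f a, orb f b})"
    proof
      fix X assume "X \<in> orbits (mrg f a b) D"
      then obtain y where y: "y \<in> D" "X = orb (mrg f a b) y" unfolding orbits_def by auto
      show "X \<in> insert ?U (orbits f D - {orb f a, orb f b})"
      proof (cases "y \<in> ?U")
        case True thus ?thesis using y mrg_orb_in by simp
      next
        case False
        hence "orb f y \<noteq> orb f a" "orb f y \<noteq> orb f b" using orb_self[of y f] by auto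
        thus ?thesis using y False mrg_orb_out unfolding orbits_def by auto
      qed
    qed
    show "insert ?U (orbits f D - {orb f a, orb f b}) \<subseteq> orbits (mrg f a b) D"
    proof
      fix X assume X: "X \<in> insert ?U (orbits f D - {orb f a, orb f b})"
      show "X \<in> orbits (mrg f a b) D"
      proof (cases "X = ?U")
        case True thus ?thesis using mrg_orb_a a unfolding orbits_def by (metis image_eqI)
      next
        case False
        then obtain y where y: "y \<in> D" "X = orb f y" "orb f y \<noteq> orb f a" "orb f y \<noteq> orb f b"
          using X unfolding orbits_def by auto
        have "y \<notin> ?U" using y orb_eq[OF p a, of y] orb_eq[OF p b, of y] by blast
        thus ?thesis using y mrg_orb_out unfolding orbits_def by (metis image_eqI)
      qed
    qed
  qed
  have ne: "orb f a \<noteq> orb f b" using nb orb_self[of b f] by auto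
  have ins: "orb f a \<in> orbits f D" "orb f b \<in> orbits f D" using a b unfolding orbits_def by auto
  have nU: "?U \<notin> orbits f D - {orb f a, orb f b}"
  proof
    assume "?U \<in> orbits f D - {orb f a, orb f b}"
    then obtain y where y: "y \<in> D" "?U = orb f y" "orb f y \<noteq> orb f a" unfolding orbits_def by auto
    have "a \<in> orb f y" using y(2) orb_self[of a f] by blast
    thus False using orb_eq[OF p y(1)] y(3) by metis
  qed
  have finO: "finite (orbits f D)" using fin unfolding orbits_def by simp
  have "card (orbits (mrg f a b) D) = card (orbits f D - {orb f a, orb f b}) + 1"
    using eq nU finO by simp
  also have "card (orbits f D - {orb f a, orb f b}) = card (orbits f D) - 2"
    using ins ne finO by (subst card_Diff_subset) auto
  finally have c: "card (orbits (mrg f a b) D) = card (orbits f D) - 2 + 1" .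
  have "card {orb f a, orb f b} \<le> card (orbits f D)" using ins finO by (intro card_mono) auto
  hence "card (orbits f D) \<ge> 2" using ne by simp
  thus ?thesis using c by simp
qed

end

definition mapd :: "'a set \<Rightarrow> ('a \<Rightarrow> 'a) \<Rightarrow> ('a \<Rightarrow> 'a) \<Rightarrow> bool" where
  "mapd D s a \<longleftrightarrow> perm_on s D \<and> (\<forall>z\<in>D. a z \<in> D \<and> a (a z) = z \<and> a z \<noteq> z)"

definition conn :: "'a set \<Rightarrow> ('a \<Rightarrow> 'a) \<Rightarrow> ('a \<Rightarrow> 'a) \<Rightarrow> bool" where
  "conn D s a \<longleftrightarrow> (\<forall>S. S \<subseteq> D \<longrightarrow> S \<noteq> {} \<longrightarrow> (\<forall>z\<in>S. s z \<in> S \<and> a z \<in> S) \<longrightarrow> S = D)"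

definition chi :: "'a set \<Rightarrow> ('a \<Rightarrow> 'a) \<Rightarrow> ('a \<Rightarrow> 'a) \<Rightarrow> int" where
  "chi D s a = int (card (orbits s D)) - int (card (orbits a D)) + int (card (orbits (s \<circ> a) D))"

lemma orb_inv: assumes "a (a z) = z" shows "orb a z = {z, a z}"
proof
  show "orb a z \<subseteq> {z, a z}" by (rule orb_closed) (auto simp: assms)
  show "{z, a z} \<subseteq> orb a z" using orb_self[of z a] orb_step[OF orb_self, of a z] by blast
qed

lemma mapd_a_perm: "mapd D s a \<Longrightarrow> perm_on a D"
  unfolding mapd_def perm_on_def inj_on_def by (metis image_subsetI)

lemma mapd_phi_perm: "mapd D s a \<Longrightarrow> perm_on (s \<circ> a) D"
  unfolding mapd_def perm_on_def inj_on_def by (auto, metis)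

lemma mapd_fin: "mapd D s a \<Longrightarrow> finite D" unfolding mapd_def perm_on_def by simp

lemma card_orbits_a:
  assumes m: "mapd D s a" and x: "x \<in> D"
  shows "card (orbits a (D - {x, a x})) = card (orbits a D) - 1"
proof -
  have ai: "\<And>z. z \<in> D \<Longrightarrow> a z \<in> D \<and> a (a z) = z \<and> a z \<noteq> z" using m by (simp add: mapd_def)
  have o: "\<And>z. z \<in> D \<Longrightarrow> orb a z = {z, a z}" using ai orb_inv by metis
  have eq: "orbits a (D - {x, a x}) = orbits a D - {{x, a x}}"
  proof
    show "orbits a (D - {x, a x}) \<subseteq> orbits a D - {{x, a x}}"
    proof
      fix X assume "X \<in> orbits a (D - {x, a x})"
      then obtain z where z: "z \<in> D" "z \<noteq> x" "z \<noteq> a x" "X = orb a z" unfolding orbits_def by auto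
      hence "X = {z, a z}" using o by simp
      hence "X \<noteq> {x, a x}" using z by auto
      thus "X \<in> orbits a D - {{x, a x}}" using z unfolding orbits_def by auto
    qed
    show "orbits a D - {{x, a x}} \<subseteq> orbits a (D - {x, a x})"
    proof
      fix X assume X: "X \<in> orbits a D - {{x, a x}}"
      then obtain z where z: "z \<in> D" "X = orb a z" unfolding orbits_def by auto
      hence Xz: "X = {z, a z}" using o by simp
      have "z \<noteq> x" using X Xz by auto
      moreover have "z \<noteq> a x" using X Xz ai[OF x] by auto
      ultimately show "X \<in> orbits a (D - {x, a x})" using z unfolding orbits_def by auto
    qed
  qed
  have "{x, a x} \<in> orbits a D" using o[OF x] x unfolding orbits_def by (metis image_eqI)
  moreover have "finite (orbits a D)" using mapd_fin[OF m] unfolding orbits_def by simp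
  ultimately show ?thesis using eq by simp
qed

lemma card_D_a:
  assumes m: "mapd D s a" shows "card D = 2 * card (orbits a D)"
proof -
  have ai: "\<And>z. z \<in> D \<Longrightarrow> a z \<in> D \<and> a (a z) = z \<and> a z \<noteq> z" using m by (simp add: mapd_def)
  have "card D = (\<Sum>Ob\<in>orbits a D. card Ob)" using card_orbits_sum[OF mapd_a_perm[OF m]] .
  also have "\<dots> = (\<Sum>Ob\<in>orbits a D. 2)"
  proof (rule sum.cong)
    fix X assume "X \<in> orbits a D"
    then obtain z where "z \<in> D" "X = orb a z" unfolding orbits_def by auto
    thus "card X = 2" using ai orb_inv by (metis card_2_iff)
  qed simp
  finally show ?thesis by simp
qed

lemma card_pos: "finite D \<Longrightarrow> x \<in> D \<Longrightarrow> card (orbits f D) \<ge> 1"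
  unfolding orbits_def by (metis One_nat_def Suc_leI card_gt_0_iff empty_iff finite_imageI image_eqI)

locale contr =
  fixes D :: "'a set" and s a :: "'a \<Rightarrow> 'a" and e B :: "'a \<Rightarrow> int" and x :: 'a
  assumes m: "mapd D s a" and c: "conn D s a" and ch: "chi D s a = 2"
    and an: "\<forall>z\<in>D. e (a z) = - e z" and vb: "\<forall>z\<in>D. B (s z) = B z + e z"
    and x: "x \<in> D" and nb: "a x \<notin> orb s x" and nD: "D \<noteq> {x, a x}"
begin

abbreviation "tau \<equiv> mrg s x (a x)"
abbreviation "g1 \<equiv> skip tau x"
abbreviation "s' \<equiv> skip g1 (a x)"
abbreviation "D' \<equiv> D - {x, a x}"
abbreviation "U \<equiv> orb s x \<union> orb s (a x)"

lemma p: "perm_on s D" using m by (simp add: mapd_def)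
lemma ai: "z \<in> D \<Longrightarrow> a z \<in> D \<and> a (a z) = z \<and> a z \<noteq> z" using m by (simp add: mapd_def)
lemma fin: "finite D" using p by (simp add: perm_on_def)
lemma axD: "a x \<in> D" using ai[OF x] by simp
lemma aax: "a (a x) = x" using ai[OF x] by simp
lemma axx: "a x \<noteq> x" using ai[OF x] by simp
lemma sD: "z \<in> D \<Longrightarrow> s z \<in> D" using p by (auto simp: perm_on_def)
lemma sinj: "z \<in> D \<Longrightarrow> w \<in> D \<Longrightarrow> s z = s w \<Longrightarrow> z = w" using p by (auto simp: perm_on_def inj_on_def)

lemma x_notin: "x \<notin> orb s (a x)" using nb orb_sym[OF p axD] by blast

lemma nd: "\<not> (s x = x \<and> s (a x) = a x)"
proof
  assume h: "s x = x \<and> s (a x) = a x"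
  have cl: "\<forall>z\<in>{x, a x}. s z \<in> {x, a x} \<and> a z \<in> {x, a x}" using h aax by auto
  have "{x, a x} \<subseteq> D" using x axD by auto
  hence "{x, a x} = D" using c cl unfolding conn_def by blast
  thus False using nD by simp
qed

lemma sax_ne_x: "s (a x) \<noteq> x"
proof
  assume "s (a x) = x"
  hence "x \<in> orb s (a x)" using orb_step[OF orb_self, of s "a x"] by simp
  thus False using x_notin by simp
qed

lemma sx_ne_ax: "s x \<noteq> a x"
proof
  assume "s x = a x"
  hence "a x \<in> orb s x" using orb_step[OF orb_self, of s x] by simp
  thus False using nb by simp
qed

lemma e_deg1: "s x = x \<Longrightarrow> e x = 0" using vb x by force
lemma e_deg2: "s (a x) = a x \<Longrightarrow> e x = 0" using vb axD an x by force

lemma tau_x: "tau x = s (a x)" by (simp add: mrg_def)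
lemma tau_ax: "tau (a x) = s x" using axx by (simp add: mrg_def)
lemma g1_ax: "g1 (a x) = (if s x = x then s (a x) else s x)"
  using tau_x tau_ax by (simp add: skip_def)

lemma sform:
  assumes z: "z \<in> D'"
  shows "s' z = (if s z = x then (if s (a x) = a x then s x else s (a x))
                 else if s z = a x then (if s x = x then s (a x) else s x) else s z)"
proof -
  have t: "tau z = s z" using z by (simp add: mrg_def)
  have g: "g1 z = (if s z = x then s (a x) else s z)" using t tau_x by (simp add: skip_def)
  have s': "s' z = (if g1 z = a x then g1 (a x) else g1 z)" by (simp add: skip_def)
  show ?thesis
  proof (cases "s z = x")
    case True
    thus ?thesis using s' g g1_ax nd by auto
  next
    case False
    thus ?thesis using s' g g1_ax by auto
  qed
qed

lemma ptau: "perm_on tau D" using mrg_perm[OF p x axD nb] .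
lemma pg1: "perm_on g1 (D - {x})" using skip_perm[OF ptau x] .
lemma axD1: "a x \<in> D - {x}" using axD axx by simp
lemma D'eq: "D' = D - {x} - {a x}" by blast
lemma ps': "perm_on s' D'" by (subst D'eq) (rule skip_perm[OF pg1 axD1])

lemma g1_ax_ne: "g1 (a x) \<noteq> a x"
proof -
  have "s x \<in> orb s x" using orb_step[OF orb_self] .
  hence "s x \<noteq> a x" using nb by auto
  thus ?thesis using g1_ax nd by auto
qed

lemma card_V: "card (orbits s' D') = card (orbits s D) - 1"
proof -
  have "card (orbits g1 (D - {x})) = card (orbits tau D)"
    using skip_card[OF ptau x] tau_x sax_ne_x by simp
  moreover have "card (orbits s' (D - {x} - {a x})) = card (orbits g1 (D - {x}))"
    using skip_card[OF pg1 axD1] g1_ax_ne by simp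
  ultimately show ?thesis using mrg_card[OF p x axD nb] by (subst D'eq) simp
qed

lemma orb_s'_U:
  assumes y: "y \<in> D'" "y \<in> U" shows "orb s' y = U - {x, a x}"
proof -
  have "orb s' y = orb g1 y - {a x}" using skip_orb[OF pg1 axD1] y by auto
  also have "orb g1 y = orb tau y - {x}" using skip_orb[OF ptau x] y by auto
  also have "orb tau y = U" using mrg_orb_in[OF p x axD nb] y by simp
  finally show ?thesis by auto
qed

lemma s'_out: "z \<in> D' \<Longrightarrow> z \<notin> U \<Longrightarrow> s' z = s z"
proof -
  assume z: "z \<in> D'" "z \<notin> U"
  have "s z \<noteq> x"
  proof
    assume "s z = x" hence "z \<in> orb s x" using orb_pre[OF p, of z x] z orb_self[of x s] by auto
    thus False using z by simp
  qed
  moreover have "s z \<noteq> a x"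
  proof
    assume "s z = a x" hence "z \<in> orb s (a x)" using orb_pre[OF p, of z "a x"] z orb_self[of "a x" s] by auto
    thus False using z by simp
  qed
  ultimately show ?thesis using sform z by simp
qed

lemma azD': "z \<in> D' \<Longrightarrow> a z \<in> D'"
  using ai aax by (metis Diff_iff insert_iff singletonD)

abbreviation "h \<equiv> skip (skip (s \<circ> a) x) (a x)"

lemma phi_agree: assumes y: "y \<in> D'" shows "s' (a y) = h y"
proof -
  have ay: "a y \<in> D'" using azD'[OF y] .
  have k1: "skip (s \<circ> a) x y = (if s (a y) = x then s (a x) else s (a y))" by (simp add: skip_def)
  have k2: "skip (s \<circ> a) x (a x) = (if s x = x then s (a x) else s x)" using aax by (simp add: skip_def)
  have k3: "h y = (if skip (s \<circ> a) x y = a x then skip (s \<circ> a) x (a x) else skip (s \<circ> a) x y)"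
    by (simp add: skip_def)
  show ?thesis
  proof (cases "s (a y) = x")
    case True thus ?thesis using sform[OF ay] k1 k2 k3 nd by auto
  next
    case False thus ?thesis using sform[OF ay] k1 k2 k3 by auto
  qed
qed

lemma card_F: "card (orbits (s' \<circ> a) D') = card (orbits (s \<circ> a) D)"
proof -
  have pp: "perm_on (s \<circ> a) D" using mapd_phi_perm[OF m] .
  have c1: "card (orbits (skip (s \<circ> a) x) (D - {x})) = card (orbits (s \<circ> a) D)"
    using skip_card[OF pp x] sax_ne_x by simp
  have pp1: "perm_on (skip (s \<circ> a) x) (D - {x})" using skip_perm[OF pp x] .
  have "skip (s \<circ> a) x (a x) = (if s x = x then s (a x) else s x)" using aax by (simp add: skip_def)
  hence ne: "skip (s \<circ> a) x (a x) \<noteq> a x" using g1_ax g1_ax_ne by simp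
  have c2: "card (orbits h (D - {x} - {a x})) = card (orbits (skip (s \<circ> a) x) (D - {x}))"
    using skip_card[OF pp1 axD1] ne by simp
  have "orbits (s' \<circ> a) D' = orbits h D'"
  proof (rule orbits_cong)
    fix y assume y: "y \<in> D'"
    show "(s' \<circ> a) y = h y" using phi_agree[OF y] by simp
    show "(s' \<circ> a) y \<in> D'" using ps' azD'[OF y] by (auto simp: perm_on_def)
  qed
  thus ?thesis using c1 c2 D'eq by simp
qed

lemma mapd': "mapd D' s' a"
  unfolding mapd_def using ps' azD' ai by auto

lemma chi': "chi D' s' a = 2"
proof -
  have v: "card (orbits s D) \<ge> 1" using card_pos[OF fin x] .
  have ea: "card (orbits a D) \<ge> 1" using card_pos[OF fin x] .
  have "card (orbits a D') = card (orbits a D) - 1" using card_orbits_a[OF m x] .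
  thus ?thesis using ch card_V card_F v ea unfolding chi_def by simp
qed

lemma U_facts: "x \<in> U" "a x \<in> U" "\<And>z. z \<in> U \<Longrightarrow> s z \<in> U" "U \<subseteq> D"
  using orb_self[of x s] orb_self[of "a x" s] orb_step[of _ s x] orb_step[of _ s "a x"]
    orb_sub[OF p x] orb_sub[OF p axD] by auto

lemma conn': "conn D' s' a"
  unfolding conn_def
proof (intro allI impI)
  fix S' assume sub: "S' \<subseteq> D'" and ne: "S' \<noteq> {}" and cl: "\<forall>z\<in>S'. s' z \<in> S' \<and> a z \<in> S'"
  show "S' = D'"
  proof (cases "\<exists>y\<in>S'. y \<in> U")
    case False
    have "\<forall>z\<in>S'. s z \<in> S' \<and> a z \<in> S'"
    proof
      fix z assume z: "z \<in> S'"
      have zD': "z \<in> D'" using z sub by blast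
      have "z \<notin> U" using False z by blast
      hence "s z = s' z" using s'_out[OF zD'] by simp
      thus "s z \<in> S' \<and> a z \<in> S'" using cl z by auto
    qed
    moreover have "S' \<subseteq> D" using sub by auto
    ultimately have "S' = D" using c ne unfolding conn_def by blast
    hence "x \<in> S'" using x by simp
    thus ?thesis using sub by auto
  next
    case True
    then obtain y where y: "y \<in> S'" "y \<in> U" by blast
    have "orb s' y \<subseteq> S'" by (rule orb_closed) (use y cl in auto)
    hence US: "U - {x, a x} \<subseteq> S'" using orb_s'_U[of y] y sub by auto
    define S where "S = S' \<union> {x, a x}"
    have SD: "S \<subseteq> D" using sub x axD unfolding S_def by auto
    have Sne: "S \<noteq> {}" unfolding S_def by simp
    have Scl: "\<forall>z\<in>S. s z \<in> S \<and> a z \<in> S"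
    proof
      fix z assume z: "z \<in> S"
      have sz: "s z \<in> S"
      proof (cases "z \<in> U")
        case True
        hence "s z \<in> U" using U_facts by blast
        thus ?thesis using US unfolding S_def by blast
      next
        case False
        hence "z \<in> S'" "z \<in> D'" using z U_facts sub unfolding S_def by auto
        hence "s z = s' z" using s'_out False by auto
        thus ?thesis using cl \<open>z \<in> S'\<close> unfolding S_def by auto
      qed
      have "a z \<in> S" using z cl aax unfolding S_def by auto
      thus "s z \<in> S \<and> a z \<in> S" using sz by simp
    qed
    have "S = D" using c SD Sne Scl unfolding conn_def by blast
    thus ?thesis using sub unfolding S_def by auto
  qed
qed

abbreviation "cc \<equiv> B x - B (a x) + e x"
abbreviation "B' \<equiv> (\<lambda>z. if z \<in> orb s (a x) then B z + cc else B z)"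

lemma mem_s: "z \<in> D \<Longrightarrow> (s z \<in> orb s (a x)) = (z \<in> orb s (a x))"
  using orb_pre[OF p] orb_step by metis

lemma sx_notin: "s x \<notin> orb s (a x)" using mem_s[OF x] x_notin by simp
lemma sax_in: "s (a x) \<in> orb s (a x)" using orb_step[OF orb_self] .

lemma eax: "e (a x) = - e x" using an x by simp
lemma Bsx: "B (s x) = B x + e x" using vb x by simp
lemma Bsax: "B (s (a x)) = B (a x) - e x" using vb axD eax by simp

lemma B'_v: "\<forall>z\<in>D'. B' (s' z) = B' z + e z"
proof
  fix z assume z: "z \<in> D'"
  have zD: "z \<in> D" using z by simp
  have Bz: "B (s z) = B z + e z" using vb zD by simp
  show "B' (s' z) = B' z + e z"
  proof (cases "s z = x")
    case True
    have zn: "z \<notin> orb s (a x)" using mem_s[OF zD] True x_notin by simp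
    show ?thesis
    proof (cases "s (a x) = a x")
      case True2: True
      thus ?thesis using True sform[OF z] zn sx_notin Bsx Bz e_deg2 by simp
    next
      case False
      thus ?thesis using True sform[OF z] zn sax_in Bsax Bz by simp
    qed
  next
    case False
    show ?thesis
    proof (cases "s z = a x")
      case True
      have zn: "z \<in> orb s (a x)" using mem_s[OF zD] True orb_self by metis
      show ?thesis
      proof (cases "s x = x")
        case True2: True
        thus ?thesis using True False sform[OF z] zn sax_in Bsax Bz e_deg1 by simp
      next
        case False2: False
        thus ?thesis using True False sform[OF z] zn sx_notin Bsx Bz by simp
      qed
    next
      case False2: False
      thus ?thesis using False sform[OF z] mem_s[OF zD] Bz by simp
    qed
  qed
qed

lemma kk:
  assumes A': "\<forall>z\<in>D'. A' (s' z) = A' z + e z \<and> A' (s' (a z)) = A' z"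
    and nd1: "s x \<noteq> x" and nd2: "s (a x) \<noteq> a x"
  shows "A' (s x) = A' (s (a x)) + e x"
proof -
  have sxD': "s x \<in> D'" using sD[OF x] nd1 sx_ne_ax by simp
  have saxD': "s (a x) \<in> D'" using sD[OF axD] nd2 sax_ne_x by simp
  have "s x \<in> U" using U_facts by blast
  hence o: "orb s' (s x) = U - {x, a x}" using orb_s'_U sxD' by blast
  have "s (a x) \<in> orb s' (s x)" using o U_facts saxD' by blast
  moreover have "\<And>z. z \<in> D' \<Longrightarrow> A' (s' z) - B' (s' z) = A' z - B' z" using A' B'_v by auto
  moreover have "\<And>z. z \<in> D' \<Longrightarrow> s' z \<in> D'" using ps' by (auto simp: perm_on_def)
  ultimately have "(\<lambda>z. A' z - B' z) (s (a x)) = (\<lambda>z. A' z - B' z) (s x)"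
    using const_on_orb[of D' "\<lambda>z. A' z - B' z" s' "s x" "s (a x)"] sxD' by blast
  thus ?thesis using sx_notin sax_in Bsx Bsax by simp
qed

lemma lift:
  assumes A': "\<forall>z\<in>D'. A' (s' z) = A' z + e z \<and> A' (s' (a z)) = A' z"
  shows "\<exists>A. \<forall>z\<in>D. A (s z) = A z + e z \<and> A (s (a z)) = A z"
proof -
  define A where "A z = (if z = x then A' (if s (a x) = a x then s x else s (a x))
     else if z = a x then A' (if s x = x then s (a x) else s x) else A' z)" for z
  have Ax: "A x = A' (if s (a x) = a x then s x else s (a x))" by (simp add: A_def)
  have Aax: "A (a x) = A' (if s x = x then s (a x) else s x)" using axx by (simp add: A_def)
  have AD': "\<And>z. z \<in> D' \<Longrightarrow> A z = A' z" by (simp add: A_def)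
  have gen: "A (s z) = A' (s' z)" if z: "z \<in> D'" for z
  proof (cases "s z = x")
    case True thus ?thesis using sform[OF z] Ax by simp
  next
    case False
    show ?thesis
    proof (cases "s z = a x")
      case True thus ?thesis using sform[OF z] Aax False by simp
    next
      case False2: False
      thus ?thesis using sform[OF z] False AD' sD z by simp
    qed
  qed
  have ex0: "s x = x \<Longrightarrow> e x = 0" "s (a x) = a x \<Longrightarrow> e x = 0" using e_deg1 e_deg2 by auto
  have sxD': "s x \<noteq> x \<Longrightarrow> s x \<in> D'" using sD[OF x] sx_ne_ax by simp
  have saxD': "s (a x) \<noteq> a x \<Longrightarrow> s (a x) \<in> D'" using sD[OF axD] sax_ne_x by simp
  have "\<forall>z\<in>D. A (s z) = A z + e z \<and> A (s (a z)) = A z"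
  proof
    fix z assume zD: "z \<in> D"
    show "A (s z) = A z + e z \<and> A (s (a z)) = A z"
    proof (cases "z = x")
      case True
      have 1: "A (s x) = A x + e x"
      proof (cases "s x = x")
        case True thus ?thesis using ex0 by simp
      next
        case False
        show ?thesis
        proof (cases "s (a x) = a x")
          case True thus ?thesis using ex0 Ax AD' sxD' False by simp
        next
          case False2: False
          thus ?thesis using kk[OF A' False False2] Ax AD' sxD' False by simp
        qed
      qed
      have 2: "A (s (a x)) = A x"
      proof (cases "s (a x) = a x")
        case True thus ?thesis using Ax Aax nd by simp
      next
        case False thus ?thesis using Ax AD' saxD' by simp
      qed
      show ?thesis using 1 2 True by simp
    next
      case False
      show ?thesis
      proof (cases "z = a x")
        case True
        have 1: "A (s (a x)) = A (a x) + e (a x)"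
        proof (cases "s (a x) = a x")
          case True thus ?thesis using ex0 eax by simp
        next
          case False
          show ?thesis
          proof (cases "s x = x")
            case True thus ?thesis using ex0 eax Aax AD' saxD' False by simp
          next
            case False2: False
            thus ?thesis using kk[OF A' False2 False] Aax AD' saxD' False eax by simp
          qed
        qed
        have 2: "A (s x) = A (a x)"
        proof (cases "s x = x")
          case True thus ?thesis using Ax Aax nd by simp
        next
          case False thus ?thesis using Aax AD' sxD' by simp
        qed
        show ?thesis using 1 2 True aax by simp
      next
        case False2: False
        have z: "z \<in> D'" using zD False False2 by simp
        have az: "a z \<in> D'" using azD'[OF z] .
        show ?thesis using gen[OF z] gen[OF az] A' z AD'[OF z] by simp
      qed
    qed
  qed
  thus ?thesis by blast
qed

end

locale mono =
  fixes D :: "'a set" and s a :: "'a \<Rightarrow> 'a" and e B :: "'a \<Rightarrow> int" and x :: 'a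
  assumes m: "mapd D s a" and c: "conn D s a" and ch: "chi D s a = 2"
    and an: "\<forall>z\<in>D. e (a z) = - e z" and vb: "\<forall>z\<in>D. B (s z) = B z + e z"
    and x: "x \<in> D" and sx: "s x = a x" and nD: "D \<noteq> {x, a x}"
    and single: "\<forall>y\<in>D. orb s y = D"
begin

abbreviation "s' \<equiv> skip (skip s x) (a x)"
abbreviation "D' \<equiv> D - {x, a x}"
abbreviation "h \<equiv> skip (skip (s \<circ> a) (a x)) x"

lemma p: "perm_on s D" using m by (simp add: mapd_def)
lemma ai: "z \<in> D \<Longrightarrow> a z \<in> D \<and> a (a z) = z \<and> a z \<noteq> z" using m by (simp add: mapd_def)
lemma fin: "finite D" using p by (simp add: perm_on_def)
lemma axD: "a x \<in> D" using ai[OF x] by simp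
lemma aax: "a (a x) = x" using ai[OF x] by simp
lemma axx: "a x \<noteq> x" using ai[OF x] by simp
lemma sD: "z \<in> D \<Longrightarrow> s z \<in> D" using p by (auto simp: perm_on_def)
lemma sinj: "z \<in> D \<Longrightarrow> w \<in> D \<Longrightarrow> s z = s w \<Longrightarrow> z = w" using p by (auto simp: perm_on_def inj_on_def)

lemma sax_ne_x: "s (a x) \<noteq> x"
proof
  assume h: "s (a x) = x"
  have "orb s x \<subseteq> {x, a x}" by (rule orb_closed) (use h sx in auto)
  hence "D \<subseteq> {x, a x}" using single x by simp
  thus False using nD x axD by auto
qed

lemma sax_ne_ax: "s (a x) \<noteq> a x"
  using sinj[OF axD x] sx axx by metis

lemma sform: assumes z: "z \<in> D'" shows "s' z = (if s z = x then s (a x) else s z)"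
proof -
  have k1: "skip s x z = (if s z = x then a x else s z)" using sx by (simp add: skip_def)
  have k2: "skip s x (a x) = s (a x)" using sax_ne_x by (simp add: skip_def)
  have ne: "s z \<noteq> a x" using sinj[of z x] z x sx by auto
  show ?thesis using k1 k2 ne by (simp add: skip_def)
qed

lemma axD1: "a x \<in> D - {x}" using axD axx by simp
lemma D'eq: "D' = D - {x} - {a x}" by blast
lemma D'eq2: "D' = D - {a x} - {x}" by blast
lemma p1: "perm_on (skip s x) (D - {x})" using skip_perm[OF p x] .
lemma ps': "perm_on s' D'" by (subst D'eq) (rule skip_perm[OF p1 axD1])

lemma card_V: "card (orbits s' D') = card (orbits s D)"
proof -
  have "card (orbits (skip s x) (D - {x})) = card (orbits s D)"
    using skip_card[OF p x] sx axx by simp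
  moreover have "skip s x (a x) = s (a x)" using sax_ne_x by (simp add: skip_def)
  hence "card (orbits s' (D - {x} - {a x})) = card (orbits (skip s x) (D - {x}))"
    using skip_card[OF p1 axD1] sax_ne_ax by simp
  ultimately show ?thesis using D'eq by simp
qed

lemma orb_s': assumes y: "y \<in> D'" shows "orb s' y = D'"
proof -
  have "orb s' y = orb (skip s x) y - {a x}" using skip_orb[OF p1 axD1] y by auto
  also have "orb (skip s x) y = orb s y - {x}" using skip_orb[OF p x] y by auto
  also have "orb s y = D" using single y by simp
  finally show ?thesis by auto
qed

lemma azD': "z \<in> D' \<Longrightarrow> a z \<in> D'"
  using ai aax by (metis Diff_iff insert_iff singletonD)

lemma phi_agree: assumes y: "y \<in> D'" shows "s' (a y) = h y"
proof -
  have ay: "a y \<in> D'" using azD'[OF y] .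
  have ne: "s (a y) \<noteq> a x" using sinj[of "a y" x] ay x sx by auto
  have k1: "skip (s \<circ> a) (a x) y = s (a y)" using ne by (simp add: skip_def)
  have k2: "skip (s \<circ> a) (a x) x = s (a x)" using sax_ne_ax by (simp add: skip_def)
  have "h y = (if s (a y) = x then s (a x) else s (a y))" using k1 k2 by (simp add: skip_def)
  thus ?thesis using sform[OF ay] by simp
qed

lemma card_F: "card (orbits (s' \<circ> a) D') = card (orbits (s \<circ> a) D) - 1"
proof -
  have pp: "perm_on (s \<circ> a) D" using mapd_phi_perm[OF m] .
  have c1: "card (orbits (skip (s \<circ> a) (a x)) (D - {a x})) = card (orbits (s \<circ> a) D) - 1"
    using skip_card[OF pp axD] aax sx by simp
  have pp1: "perm_on (skip (s \<circ> a) (a x)) (D - {a x})" using skip_perm[OF pp axD] .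
  have xD1: "x \<in> D - {a x}" using x axx by simp
  have "skip (s \<circ> a) (a x) x = s (a x)" using sax_ne_ax by (simp add: skip_def)
  hence c2: "card (orbits h (D - {a x} - {x})) = card (orbits (skip (s \<circ> a) (a x)) (D - {a x}))"
    using skip_card[OF pp1 xD1] sax_ne_x by simp
  have "orbits (s' \<circ> a) D' = orbits h D'"
  proof (rule orbits_cong)
    fix y assume y: "y \<in> D'"
    show "(s' \<circ> a) y = h y" using phi_agree[OF y] by simp
    show "(s' \<circ> a) y \<in> D'" using ps' azD'[OF y] by (auto simp: perm_on_def)
  qed
  thus ?thesis using c1 c2 D'eq2 by simp
qed

lemma mapd': "mapd D' s' a"
  unfolding mapd_def using ps' azD' ai by auto

lemma chi': "chi D' s' a = 2"
proof -
  have f: "card (orbits (s \<circ> a) D) \<ge> 1" using card_pos[OF fin x] .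
  have ea: "card (orbits a D) \<ge> 1" using card_pos[OF fin x] .
  have "card (orbits a D') = card (orbits a D) - 1" using card_orbits_a[OF m x] .
  thus ?thesis using ch card_V card_F f ea unfolding chi_def by simp
qed

lemma conn': "conn D' s' a"
  unfolding conn_def
proof (intro allI impI)
  fix S' assume sub: "S' \<subseteq> D'" and ne: "S' \<noteq> {}" and cl: "\<forall>z\<in>S'. s' z \<in> S' \<and> a z \<in> S'"
  obtain y where y: "y \<in> S'" using ne by blast
  have "orb s' y \<subseteq> S'" by (rule orb_closed) (use y cl in auto)
  thus "S' = D'" using orb_s'[of y] y sub by auto
qed

lemma eax: "e (a x) = - e x" using an x by simp

lemma B_v: "\<forall>z\<in>D'. B (s' z) = B z + e z"
proof
  fix z assume z: "z \<in> D'"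
  have b1: "B (s (a x)) = B (a x) + e (a x)" using vb axD by simp
  have b2: "B (a x) = B x + e x" using vb x sx by force
  have "B (s (a x)) = B x" using b1 b2 eax by simp
  thus "B (s' z) = B z + e z" using sform[OF z] vb z by auto
qed

lemma lift:
  assumes A': "\<forall>z\<in>D'. A' (s' z) = A' z + e z \<and> A' (s' (a z)) = A' z"
  shows "\<exists>A. \<forall>z\<in>D. A (s z) = A z + e z \<and> A (s (a z)) = A z"
proof -
  define A where "A z = (if z = x then A' (s (a x)) else if z = a x then A' (s (a x)) + e x else A' z)" for z
  have saxD': "s (a x) \<in> D'" using sD[OF axD] sax_ne_x sax_ne_ax by simp
  have Ax: "A x = A' (s (a x))" by (simp add: A_def)
  have Aax: "A (a x) = A' (s (a x)) + e x" using axx by (simp add: A_def)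
  have AD': "\<And>z. z \<in> D' \<Longrightarrow> A z = A' z" by (simp add: A_def)
  have gen: "A (s z) = A' (s' z)" if z: "z \<in> D'" for z
  proof (cases "s z = x")
    case True thus ?thesis using sform[OF z] Ax by simp
  next
    case False
    have "s z \<noteq> a x" using sinj[of z x] z x sx by auto
    thus ?thesis using sform[OF z] False AD' sD z by simp
  qed
  have "\<forall>z\<in>D. A (s z) = A z + e z \<and> A (s (a z)) = A z"
  proof
    fix z assume zD: "z \<in> D"
    show "A (s z) = A z + e z \<and> A (s (a z)) = A z"
    proof (cases "z = x")
      case True thus ?thesis using sx Ax Aax aax AD' saxD' by simp
    next
      case False
      show ?thesis
      proof (cases "z = a x")
        case True thus ?thesis using sx Ax Aax aax AD' saxD' eax by simp
      next
        case False2: False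
        have z: "z \<in> D'" using zD False False2 by simp
        have az: "a z \<in> D'" using azD'[OF z] .
        show ?thesis using gen[OF z] gen[OF az] A' z AD'[OF z] by simp
      qed
    qed
  qed
  thus ?thesis by blast
qed

end

lemma single_vertex:
  assumes m: "mapd D s a" and c: "conn D s a" and loops: "\<forall>x\<in>D. a x \<in> orb s x" and y: "y \<in> D"
  shows "orb s y = D"
proof -
  have p: "perm_on s D" using m by (simp add: mapd_def)
  have sub: "orb s y \<subseteq> D" using orb_sub[OF p y] .
  have cl: "\<forall>z\<in>orb s y. s z \<in> orb s y \<and> a z \<in> orb s y"
  proof
    fix z assume z: "z \<in> orb s y"
    have zD: "z \<in> D" using z sub by auto
    have "a z \<in> orb s z" using loops zD by simp
    hence "a z \<in> orb s y" using orb_trans[OF z] by auto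
    thus "s z \<in> orb s y \<and> a z \<in> orb s y" using orb_step[OF z] by simp
  qed
  show ?thesis using c sub cl orb_self[of y s] unfolding conn_def by blast
qed

theorem jordan:
  fixes e B :: "'a \<Rightarrow> int"
  assumes "mapd D s a" "conn D s a" "chi D s a = 2" "\<forall>z\<in>D. e (a z) = - e z"
    "\<forall>z\<in>D. B (s z) = B z + e z"
  shows "\<exists>A. \<forall>z\<in>D. A (s z) = A z + e z \<and> A (s (a z)) = A z"
  using assms
proof (induction "card D" arbitrary: D s B rule: less_induct)
  case less
  have m: "mapd D s a" and c: "conn D s a" and ch: "chi D s a = 2"
    and an: "\<forall>z\<in>D. e (a z) = - e z" and vb: "\<forall>z\<in>D. B (s z) = B z + e z" using less.prems by auto
  have p: "perm_on s D" using m by (simp add: mapd_def)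
  have fin: "finite D" using p by (simp add: perm_on_def)
  have ai: "\<And>z. z \<in> D \<Longrightarrow> a z \<in> D \<and> a (a z) = z \<and> a z \<noteq> z" using m by (simp add: mapd_def)
  show ?case
  proof (cases "\<exists>x\<in>D. a x \<notin> orb s x")
    case True
    then obtain x where x: "x \<in> D" "a x \<notin> orb s x" by blast
    show ?thesis
    proof (cases "D = {x, a x}")
      case True
      have "s x \<in> D" using p x by (auto simp: perm_on_def)
      moreover have "s x \<noteq> a x" using x orb_step[OF orb_self, of s x] by auto
      ultimately have sx: "s x = x" using True by auto
      have ex: "e x = 0" using vb x sx by force
      have eax: "e (a x) = 0" using an x ex by simp
      have "\<forall>z\<in>D. (\<lambda>_. 0::int) (s z) = (\<lambda>_. 0) z + e z \<and> (\<lambda>_. 0::int) (s (a z)) = (\<lambda>_. 0) z"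
        using True ex eax by auto
      thus ?thesis by (rule exI[where x="\<lambda>_. 0"])
    next
      case False
      interpret contr D s a e B x using m c ch an vb x False by unfold_locales auto
      have lt: "card D' < card D" by (rule psubset_card_mono) (use fin x in auto)
      have an': "\<forall>z\<in>D'. e (a z) = - e z" using an by auto
      obtain A' where "\<forall>z\<in>D'. A' (s' z) = A' z + e z \<and> A' (s' (a z)) = A' z"
        using less.hyps[OF lt mapd' conn' chi' an' B'_v] by blast
      thus ?thesis using lift by blast
    qed
  next
    case False
    hence loops: "\<forall>x\<in>D. a x \<in> orb s x" by blast
    have single: "\<forall>y\<in>D. orb s y = D" using single_vertex[OF m c loops] by blast
    have Dne: "D \<noteq> {}" using ch unfolding chi_def orbits_def by auto
    then obtain d where d: "d \<in> D" by blast
    have V: "card (orbits s D) = 1"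
    proof -
      have "orbits s D = {D}" unfolding orbits_def using single Dne by auto
      thus ?thesis by simp
    qed
    have E: "card D = 2 * card (orbits a D)" using card_D_a[OF m] .
    have F: "int (card (orbits (s \<circ> a) D)) = int (card (orbits a D)) + 1" using ch V unfolding chi_def by simp
    have "\<exists>y\<in>D. s (a y) = y"
    proof (rule ccontr)
      assume "\<not> (\<exists>y\<in>D. s (a y) = y)"
      hence nf: "\<forall>y\<in>D. (s \<circ> a) y \<noteq> y" by simp
      have pp: "perm_on (s \<circ> a) D" using mapd_phi_perm[OF m] .
      have "(\<Sum>Ob\<in>orbits (s \<circ> a) D. (2::nat)) \<le> (\<Sum>Ob\<in>orbits (s \<circ> a) D. card Ob)"
      proof (rule sum_mono)
        fix X assume "X \<in> orbits (s \<circ> a) D"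
        then obtain y where y: "y \<in> D" "X = orb (s \<circ> a) y" unfolding orbits_def by auto
        have "{y, (s \<circ> a) y} \<subseteq> X" using y orb_self[of y "s \<circ> a"] orb_step[OF orb_self, of "s \<circ> a" y] by auto
        moreover have "finite X" using y orb_sub[OF pp] fin finite_subset by metis
        ultimately have "card {y, (s \<circ> a) y} \<le> card X" by (rule card_mono[rotated])
        moreover have "y \<noteq> (s \<circ> a) y" using nf y by metis
        hence "card {y, (s \<circ> a) y} = 2" by simp
        ultimately show "2 \<le> card X" by simp
      qed
      hence "2 * card (orbits (s \<circ> a) D) \<le> card D" using card_orbits_sum[OF pp] by simp
      thus False using E F by simp
    qed
    then obtain y where y: "y \<in> D" "s (a y) = y" by blast
    define x where "x = a y"
    have xD: "x \<in> D" using ai[OF y(1)] x_def by simp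
    have sx: "s x = a x" using y ai x_def by simp
    show ?thesis
    proof (cases "D = {x, a x}")
      case True
      have axx: "a x \<noteq> x" using ai xD by simp
      have "s (a x) \<in> D" using p ai xD by (auto simp: perm_on_def)
      moreover have "s (a x) \<noteq> a x"
      proof
        assume "s (a x) = a x"
        hence "s (a x) = s x" using sx by simp
        thus False using p xD ai axx unfolding perm_on_def inj_on_def by metis
      qed
      ultimately have sax: "s (a x) = x" using True by auto
      have eax: "e (a x) = - e x" using an xD by simp
      define A where "A z = (if z = x then 0 else e x)" for z
      have "\<forall>z\<in>D. A (s z) = A z + e z \<and> A (s (a z)) = A z"
        using True sx sax eax axx ai xD unfolding A_def by auto
      thus ?thesis by blast
    next
      case False
      interpret mono D s a e B x using m c ch an vb xD sx False single by unfold_locales auto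
      have lt: "card D' < card D" by (rule psubset_card_mono) (use fin xD in auto)
      have an': "\<forall>z\<in>D'. e (a z) = - e z" using an by auto
      obtain A' where "\<forall>z\<in>D'. A' (s' z) = A' z + e z \<and> A' (s' (a z)) = A' z"
        using less.hyps[OF lt mapd' conn' chi' an' B_v] by blast
      thus ?thesis using lift by blast
    qed
  qed
qed

lemma pw2: "(f ^^ 2) x = f (f x)" by (simp add: numeral_2_eq_2)
lemma pw3: "(f ^^ 3) x = f (f (f x))" by (simp add: numeral_3_eq_3)
lemma pw4: "(f ^^ 4) x = f (f (f (f x)))"
  by (metis Suc_numeral funpow.simps(2) o_apply pw3 semiring_norm(2) semiring_norm(8))

lemma funpow_into: "(\<And>y. y \<in> S \<Longrightarrow> f y \<in> S) \<Longrightarrow> x \<in> S \<Longrightarrow> (f ^^ n) x \<in> S"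
  by (induction n) auto

lemma twist_not_in:
  assumes pT: "perm_on T D" and z: "z \<in> D"
    and rD: "\<And>w. w \<in> D \<Longrightarrow> r w \<in> D" and rfix: "\<And>w. w \<in> D \<Longrightarrow> r w \<noteq> w"
    and rT: "\<And>w. w \<in> D \<Longrightarrow> r w \<noteq> T w"
    and tw: "\<And>w. w \<in> D \<Longrightarrow> T (r (T w)) = r w"
  shows "r z \<notin> orb T z"
proof
  assume "r z \<in> orb T z"
  then obtain k where k: "r z = (T ^^ k) z" unfolding orb_def by auto
  have TD: "\<And>w. w \<in> D \<Longrightarrow> T w \<in> D" using pT by (auto simp: perm_on_def)
  have Tinj: "\<And>v w. v \<in> D \<Longrightarrow> w \<in> D \<Longrightarrow> T v = T w \<Longrightarrow> v = w" using pT by (auto simp: perm_on_def inj_on_def)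
  have TnD: "\<And>n. (T ^^ n) z \<in> D" using funpow_in[OF pT z] .
  have cl: "n \<le> k \<Longrightarrow> r ((T ^^ n) z) = (T ^^ (k - n)) z" for n
  proof (induction n)
    case 0 thus ?case using k by simp
  next
    case (Suc n)
    define w where "w = (T ^^ n) z"
    have wD: "w \<in> D" using TnD w_def by simp
    have "T (r (T w)) = (T ^^ (k - n)) z" using tw[OF wD] Suc w_def by simp
    also have "k - n = Suc (k - Suc n)" using Suc.prems by simp
    also have "(T ^^ Suc (k - Suc n)) z = T ((T ^^ (k - Suc n)) z)" by simp
    finally have "r (T w) = (T ^^ (k - Suc n)) z" using Tinj rD TD wD TnD by blast
    thus ?case by (simp add: w_def)
  qed
  define n where "n = k div 2"
  have wD: "(T ^^ n) z \<in> D" using TnD .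
  show False
  proof (cases "even k")
    case True
    hence "k - n = n" unfolding n_def by auto
    hence "r ((T ^^ n) z) = (T ^^ n) z" using cl[of n] unfolding n_def by simp
    thus False using rfix[OF wD] by simp
  next
    case False
    hence "k - n = Suc n" unfolding n_def by presburger
    hence "r ((T ^^ n) z) = T ((T ^^ n) z)" using cl[of n] unfolding n_def by simp
    thus False using rT[OF wD] by simp
  qed
qed

locale kp =
  fixes D :: "'a set" and sigma alpha :: "'a \<Rightarrow> 'a" and Or :: "'a set"
  assumes kpm: "knot_projection_map D sigma alpha"
    and Or: "Or \<in> orbits (traversal sigma alpha) D"
begin

abbreviation "T \<equiv> traversal sigma alpha"

lemma fin: "finite D" using kpm by (simp add: knot_projection_map_def)
lemma bs: "bij_betw sigma D D" using kpm by (simp add: knot_projection_map_def)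
lemma ba: "bij_betw alpha D D" using kpm by (simp add: knot_projection_map_def)
lemma sD: "z \<in> D \<Longrightarrow> sigma z \<in> D" using bs by (meson bij_betwE)
lemma aD: "z \<in> D \<Longrightarrow> alpha z \<in> D" using ba by (meson bij_betwE)
lemma sinj: "v \<in> D \<Longrightarrow> w \<in> D \<Longrightarrow> sigma v = sigma w \<Longrightarrow> v = w"
  using bs by (metis bij_betw_imp_inj_on inj_onD)
lemma aa: "z \<in> D \<Longrightarrow> alpha (alpha z) = z" using kpm by (simp add: knot_projection_map_def)
lemma an: "z \<in> D \<Longrightarrow> alpha z \<noteq> z" using kpm by (simp add: knot_projection_map_def)
lemma dfacts: "z \<in> D \<Longrightarrow> (sigma ^^ 4) z = z \<and> (sigma ^^ 2) z \<noteq> z"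
  using kpm unfolding knot_projection_map_def by blast
lemma s4: "z \<in> D \<Longrightarrow> sigma (sigma (sigma (sigma z))) = z"
  using dfacts pw4 by metis
lemma s2ne: "z \<in> D \<Longrightarrow> sigma (sigma z) \<noteq> z"
  using dfacts pw2 by metis
lemma Tdef: "T z = sigma (sigma (alpha z))" by (simp add: traversal_def pw2)

lemma pT: "perm_on T D"
  unfolding perm_on_def using fin sD aD aa Tdef unfolding inj_on_def by (auto, metis sinj sD aD aa)

lemma pS: "perm_on sigma D" unfolding perm_on_def using fin sD bs bij_betw_imp_inj_on by blast

lemma mapdK: "mapd D sigma alpha" unfolding mapd_def using pS aD aa an by simp

lemma connK: "conn D sigma alpha"
  unfolding conn_def
proof (intro allI impI)
  fix S assume sub: "S \<subseteq> D" and ne: "S \<noteq> {}" and cl: "\<forall>z\<in>S. sigma z \<in> S \<and> alpha z \<in> S"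
  obtain d where d: "d \<in> S" using ne by blast
  have R: "\<forall>d\<in>D. \<forall>e\<in>D. (d, e) \<in> ({(x, sigma x) | x. x \<in> D} \<union> {(x, alpha x) | x. x \<in> D})\<^sup>*"
    using kpm by (simp add: knot_projection_map_def)
  have "e \<in> S" if e: "e \<in> D" for e
  proof -
    have "(d, e) \<in> ({(x, sigma x) | x. x \<in> D} \<union> {(x, alpha x) | x. x \<in> D})\<^sup>*" using R d sub e by blast
    thus ?thesis
    proof (induction rule: rtrancl_induct)
      case base thus ?case using d .
    next
      case (step y z) thus ?case using cl by auto
    qed
  qed
  thus "S = D" using sub by blast
qed

lemma chiK: "chi D sigma alpha = 2" using kpm unfolding chi_def knot_projection_map_def by simp

lemma two: "card (orbits T D) = 2" using kpm by (simp add: knot_projection_map_def)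

lemma two_orbits:
  assumes "X \<in> orbits T D" "Y \<in> orbits T D" "X \<noteq> Y" "Z \<in> orbits T D" shows "Z = X \<or> Z = Y"
proof (rule ccontr)
  assume "\<not> (Z = X \<or> Z = Y)"
  hence "Z \<noteq> X" "Z \<noteq> Y" by auto
  hence "card {X, Y, Z} = 3" using assms(3) by simp
  moreover have "finite (orbits T D)" using fin unfolding orbits_def by simp
  hence "card {X, Y, Z} \<le> card (orbits T D)" using assms by (intro card_mono) auto
  ultimately show False using two by simp
qed

lemma K_gen:
  assumes rD: "\<And>w. w \<in> D \<Longrightarrow> r w \<in> D" and rn: "\<And>w. w \<in> D \<Longrightarrow> r w \<notin> orb T w" and z: "z \<in> D"
  shows "(r z \<in> Or) = (z \<notin> Or)"
proof -
  obtain d0 where d0: "d0 \<in> D" "Or = orb T d0" using Or unfolding orbits_def by auto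
  have ne: "orb T z \<noteq> orb T (r z)" using rn[OF z] orb_self[of "r z" T] by auto
  show ?thesis
  proof (cases "z \<in> Or")
    case True
    hence "orb T z = Or" using orb_eq[OF pT d0(1)] d0 by simp
    thus ?thesis using rn[OF z] True by auto
  next
    case False
    have "orb T z \<noteq> Or" using False orb_self[of z T] by auto
    moreover have "orb T z \<in> orbits T D" "orb T (r z) \<in> orbits T D" using z rD[OF z] unfolding orbits_def by auto
    ultimately have "orb T (r z) = Or" using two_orbits[OF Or, of "orb T z" "orb T (r z)"] ne by auto
    thus ?thesis using False orb_self[of "r z" T] by auto
  qed
qed

lemma K1: "z \<in> D \<Longrightarrow> (alpha z \<in> Or) = (z \<notin> Or)"
proof (rule K_gen[OF aD])
  fix w assume w: "w \<in> D"
  show "alpha w \<notin> orb T w"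
  proof (rule twist_not_in[OF pT w])
    fix v assume v: "v \<in> D"
    show "alpha v \<in> D" using aD[OF v] .
    show "alpha v \<noteq> v" using an[OF v] .
    show "alpha v \<noteq> T v" using s2ne[OF aD[OF v]] Tdef by metis
    show "T (alpha (T v)) = alpha v" using Tdef aa s4 sD aD v by simp
  qed
qed

lemma K2: "z \<in> D \<Longrightarrow> (sigma (sigma z) \<in> Or) = (z \<notin> Or)"
proof (rule K_gen[where r="\<lambda>z. sigma (sigma z)"])
  fix w assume w: "w \<in> D"
  show "sigma (sigma w) \<in> D" using sD w by simp
  show "sigma (sigma w) \<notin> orb T w"
  proof (rule twist_not_in[OF pT w])
    fix v assume v: "v \<in> D"
    show "sigma (sigma v) \<in> D" using sD v by simp
    show "sigma (sigma v) \<noteq> v" using s2ne[OF v] .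
    show "sigma (sigma v) \<noteq> T v" using Tdef sinj sD aD v an by metis
    show "T (sigma (sigma (T v))) = sigma (sigma v)" using Tdef aa s4 sD aD v by simp
  qed
qed

end

lemma distinct4_pairs:
  assumes "distinct [f d, f (g d), f (g (g d)), f (g (g (g d)))]" "i < 4" "j < (4::nat)" "i \<noteq> j"
  shows "f ((g ^^ i) d) \<noteq> f ((g ^^ j) d)"
proof -
  have "i = 0 \<or> i = 1 \<or> i = 2 \<or> i = 3" "j = 0 \<or> j = 1 \<or> j = 2 \<or> j = 3" using assms(2,3) by auto
  thus ?thesis using assms(1,4) by (auto simp: pw2 pw3)
qed

definition hh :: "('a \<Rightarrow> int) \<Rightarrow> ('a \<Rightarrow> 'a) \<Rightarrow> ('a + 'a \<times> nat) \<Rightarrow> int \<times> int" where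
  "hh A sg w = (case w of Inl d \<Rightarrow> (0, A d) | Inr (s, k) \<Rightarrow>
     (if k = 0 \<or> k = 4 then (1, 0) else if k = 2 \<or> k = 7 then (2, 0)
      else if k = 1 \<or> k = 5 then (0, A (sg (sg (sg s)))) else (0, A (sg s))))"

context kp
begin

lemma alexander: "\<exists>A::'a \<Rightarrow> int. \<forall>z\<in>D. A (sigma z) = A z + (if z \<in> Or then 1 else -1) \<and> A (sigma (alpha z)) = A z"
proof -
  define ee where "ee z = (if z \<in> Or then 1 else (-1::int))" for z
  have an: "\<forall>z\<in>D. ee (alpha z) = - ee z"
    using K1 unfolding ee_def by auto
  define Bv where "Bv z = (if z \<in> Or then (if sigma z \<in> Or then -1 else 0) else (if sigma z \<in> Or then 0 else (1::int)))" for z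
  have vb: "\<forall>z\<in>D. Bv (sigma z) = Bv z + ee z"
  proof
    fix z assume z: "z \<in> D"
    show "Bv (sigma z) = Bv z + ee z"
      using K2[OF z] unfolding Bv_def ee_def by auto
  qed
  have "\<exists>A. \<forall>z\<in>D. A (sigma z) = A z + ee z \<and> A (sigma (alpha z)) = A z"
    by (rule jordan[OF mapdK connK chiK an vb])
  thus ?thesis unfolding ee_def .
qed

end

locale kpA = kp +
  fixes A :: "'a \<Rightarrow> int"
  assumes Aal: "\<forall>z\<in>D. A (sigma z) = A z + (if z \<in> Or then 1 else -1) \<and> A (sigma (alpha z)) = A z"
begin

abbreviation "sB \<equiv> B_sigma sigma Or"
abbreviation "aB \<equiv> B_alpha alpha"
abbreviation "DB \<equiv> B_darts D sigma Or"
abbreviation "h \<equiv> hh A sigma"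

definition sp :: "'a \<Rightarrow> bool" where "sp s \<longleftrightarrow> s \<in> D \<and> s \<in> Or \<and> sigma s \<notin> Or"

definition X :: "'a \<Rightarrow> ('a + 'a \<times> nat) set" where
  "X s = {Inl s, Inl (sigma s), Inl (sigma (sigma s)), Inl (sigma (sigma (sigma s)))} \<union> {Inr (s, k) | k. k < 8}"

lemma OrD: "Or \<subseteq> D"
  using Or orb_sub[OF pT] unfolding orbits_def by auto

lemma DB_Inl: "Inl d \<in> DB \<longleftrightarrow> d \<in> D" by (auto simp: B_darts_def)
lemma DB_Inr: "Inr (s, k) \<in> DB \<longleftrightarrow> sp s \<and> k < 8" by (auto simp: B_darts_def sp_def)

context
  fixes s assumes s: "sp s"
begin

lemma sD0: "s \<in> D" using s by (simp add: sp_def)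
lemma s0: "s \<in> Or" using s by (simp add: sp_def)
lemma s1: "sigma s \<notin> Or" using s by (simp add: sp_def)
lemma s2: "sigma (sigma s) \<notin> Or" using K2[OF sD0] s0 by simp
lemma s3: "sigma (sigma (sigma s)) \<in> Or" using K2[OF sD[OF sD0]] s1 by simp
lemma s4s: "sigma (sigma (sigma (sigma s))) = s" using s4[OF sD0] .
lemma A1: "A (sigma s) = A s + 1" using Aal sD0 s0 by simp
lemma A2: "A (sigma (sigma s)) = A s" using Aal sD[OF sD0] s1 A1 by simp
lemma A3: "A (sigma (sigma (sigma s))) = A s - 1" using Aal sD[OF sD[OF sD0]] s2 A2 by simp

lemma sB_eqs:
  "sB (Inl s) = Inr (s, 6)"
  "sB (Inl (sigma s)) = Inl (sigma (sigma s))"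
  "sB (Inl (sigma (sigma s))) = Inr (s, 1)"
  "sB (Inl (sigma (sigma (sigma s)))) = Inl s"
  "sB (Inr (s, 0)) = Inl (sigma s)"
  "sB (Inr (s, 1)) = Inr (s, 0)"
  "sB (Inr (s, 2)) = Inr (s, 3)"
  "sB (Inr (s, 3)) = Inr (s, 4)"
  "sB (Inr (s, 4)) = Inr (s, 5)"
  "sB (Inr (s, 5)) = Inr (s, 2)"
  "sB (Inr (s, 6)) = Inr (s, 7)"
  "sB (Inr (s, 7)) = Inl (sigma (sigma (sigma s)))"
  using s0 s1 s2 s3 s4s by (simp_all add: B_sigma_def pw2 pw3)

lemma h_eqs:
  "h (Inl s) = (0, A s)"
  "h (Inl (sigma s)) = (0, A s + 1)"
  "h (Inl (sigma (sigma s))) = (0, A s)"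
  "h (Inl (sigma (sigma (sigma s)))) = (0, A s - 1)"
  "h (Inr (s, 0)) = (1, 0)"
  "h (Inr (s, 1)) = (0, A s - 1)"
  "h (Inr (s, 2)) = (2, 0)"
  "h (Inr (s, 3)) = (0, A s + 1)"
  "h (Inr (s, 4)) = (1, 0)"
  "h (Inr (s, 5)) = (0, A s - 1)"
  "h (Inr (s, 6)) = (0, A s + 1)"
  "h (Inr (s, 7)) = (2, 0)"
  using A1 A2 A3 by (simp_all add: hh_def)

lemma X_cases:
  assumes "d \<in> X s"
  shows "d = Inl s \<or> d = Inl (sigma s) \<or> d = Inl (sigma (sigma s)) \<or> d = Inl (sigma (sigma (sigma s))) \<or>
    d = Inr (s, 0) \<or> d = Inr (s, 1) \<or> d = Inr (s, 2) \<or> d = Inr (s, 3) \<or>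
    d = Inr (s, 4) \<or> d = Inr (s, 5) \<or> d = Inr (s, 6) \<or> d = Inr (s, 7)"
proof -
  have "\<And>k::nat. k < 8 \<Longrightarrow> k = 0 \<or> k = 1 \<or> k = 2 \<or> k = 3 \<or> k = 4 \<or> k = 5 \<or> k = 6 \<or> k = 7" by auto
  thus ?thesis using assms unfolding X_def by blast
qed

lemma X_closed: assumes d: "d \<in> X s" shows "sB d \<in> X s"
  using X_cases[OF d] by (elim disjE) (simp_all add: sB_eqs[unfolded One_nat_def] X_def)

lemma X_DB: "X s \<subseteq> DB"
  using sD0 sD s unfolding X_def B_darts_def sp_def by auto

lemma cross: assumes d: "d \<in> X s" shows "distinct [h d, h (sB d), h (sB (sB d)), h (sB (sB (sB d)))]"
  using X_cases[OF d] by (elim disjE) (simp_all add: sB_eqs[unfolded One_nat_def] h_eqs[unfolded One_nat_def])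

end

lemma in_cross: assumes d: "d \<in> DB" shows "\<exists>s. sp s \<and> d \<in> X s"
proof (cases d)
  case (Inl e)
  have e: "e \<in> D" using d Inl DB_Inl by simp
  have se: "sigma e \<in> D" using sD[OF e] .
  show ?thesis
  proof (cases "e \<in> Or")
    case True
    show ?thesis
    proof (cases "sigma e \<in> Or")
      case False
      thus ?thesis using True e Inl by (intro exI[of _ e]) (auto simp: sp_def X_def)
    next
      case True2: True
      have "sigma (sigma e) \<notin> Or" using K2[OF e] True by simp
      moreover have "sigma (sigma (sigma (sigma e))) = e" using s4[OF e] .
      ultimately show ?thesis using True2 se Inl by (intro exI[of _ "sigma e"]) (auto simp: sp_def X_def)
    qed
  next
    case False
    show ?thesis
    proof (cases "sigma e \<in> Or")
      case False2: False
      have s3: "sigma (sigma (sigma e)) \<in> Or" using K2[OF se] False2 by simp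
      have "sigma (sigma (sigma (sigma e))) = e" using s4[OF e] .
      thus ?thesis using s3 False sD se Inl
        by (intro exI[of _ "sigma (sigma (sigma e))"]) (auto simp: sp_def X_def)
    next
      case True
      have s2: "sigma (sigma e) \<in> Or" using K2[OF e] False by simp
      have s3: "sigma (sigma (sigma e)) \<notin> Or" using K2[OF se] True by simp
      have "sigma (sigma (sigma (sigma e))) = e" using s4[OF e] .
      thus ?thesis using s2 s3 sD se Inl
        by (intro exI[of _ "sigma (sigma e)"]) (auto simp: sp_def X_def)
    qed
  qed
next
  case (Inr p)
  then obtain s k where p: "d = Inr (s, k)" by (cases p) auto
  hence "sp s" "k < 8" using d DB_Inr by auto
  thus ?thesis using p by (intro exI[of _ s]) (auto simp: X_def)
qed

lemma phi_inv: assumes w: "w \<in> DB" shows "sB (aB w) \<in> DB \<and> h (sB (aB w)) = h w"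
proof (cases w)
  case (Inl d)
  have d: "d \<in> D" using w Inl DB_Inl by simp
  define e where "e = alpha d"
  have eD: "e \<in> D" using aD[OF d] e_def by simp
  have Ae: "A (sigma e) = A d" using Aal d e_def by simp
  have aw: "aB w = Inl e" using Inl e_def by (simp add: B_alpha_def)
  show ?thesis
  proof (cases "e \<in> Or")
    case True
    show ?thesis
    proof (cases "sigma e \<in> Or")
      case True2: True
      have "sB (Inl e) = Inl (sigma e)" using True True2 by (simp add: B_sigma_def)
      thus ?thesis using aw Inl Ae sD[OF eD] DB_Inl by (simp add: hh_def)
    next
      case False
      have "sB (Inl e) = Inr (e, 6)" using True False by (simp add: B_sigma_def)
      moreover have "sp e" using True False eD by (simp add: sp_def)
      ultimately show ?thesis using aw Inl Ae DB_Inr by (simp add: hh_def)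
    qed
  next
    case False
    show ?thesis
    proof (cases "sigma e \<in> Or")
      case True
      have "sB (Inl e) = Inr (sigma (sigma e), 1)" using True False by (simp add: B_sigma_def pw2)
      moreover have "sp (sigma (sigma e))"
        using K2[OF eD] K2[OF sD[OF eD]] True False sD eD by (simp add: sp_def)
      moreover have "sigma (sigma (sigma (sigma (sigma e)))) = sigma e" using s4[OF sD[OF eD]] .
      ultimately show ?thesis using aw Inl Ae DB_Inr by (simp add: hh_def)
    next
      case False2: False
      have "sB (Inl e) = Inl (sigma e)" using False False2 by (simp add: B_sigma_def)
      thus ?thesis using aw Inl Ae sD[OF eD] DB_Inl by (simp add: hh_def)
    qed
  qed
next
  case (Inr p)
  then obtain s k where p: "w = Inr (s, k)" by (cases p) auto
  hence s: "sp s" and k: "k < 8" using w DB_Inr by auto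
  have "k = 0 \<or> k = 1 \<or> k = 2 \<or> k = 3 \<or> k = 4 \<or> k = 5 \<or> k = 6 \<or> k = 7" using k by auto
  moreover have "Inl (sigma s) \<in> DB" "Inl (sigma (sigma (sigma s))) \<in> DB"
    using sD sD0[OF s] DB_Inl by auto
  ultimately show ?thesis using p s sB_eqs[OF s] DB_Inr
    by (elim disjE) (simp_all add: B_alpha_def hh_def)
qed

lemma reducedA: "reduced_map DB sB aB"
  unfolding reduced_map_def
proof (intro ballI allI impI)
  fix d i j assume d: "d \<in> DB" and i: "i < (4::nat)" and j: "j < (4::nat)" and ij: "i \<noteq> j"
  obtain s where s: "sp s" and dX: "d \<in> X s" using in_cross[OF d] by blast
  have uX: "(sB ^^ i) d \<in> X s" by (rule funpow_into[OF X_closed[OF s] dX])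
  have vX: "(sB ^^ j) d \<in> X s" by (rule funpow_into[OF X_closed[OF s] dX])
  have hne: "h ((sB ^^ i) d) \<noteq> h ((sB ^^ j) d)" using distinct4_pairs[OF cross[OF s dX] i j ij] .
  have uD: "(sB ^^ i) d \<in> DB" using uX X_DB[OF s] by blast
  have vD: "(sB ^^ j) d \<in> DB" using vX X_DB[OF s] by blast
  have sub: "orb (sB \<circ> aB) ((sB ^^ i) d) \<subseteq> {w \<in> DB. h w = h ((sB ^^ i) d)}"
  proof (rule orb_closed)
    show "(sB ^^ i) d \<in> {w \<in> DB. h w = h ((sB ^^ i) d)}" using uD by simp
    fix w assume "w \<in> {w \<in> DB. h w = h ((sB ^^ i) d)}"
    thus "(sB \<circ> aB) w \<in> {w \<in> DB. h w = h ((sB ^^ i) d)}" using phi_inv by auto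
  qed
  show "orb (sB \<circ> aB) ((sB ^^ i) d) \<noteq> orb (sB \<circ> aB) ((sB ^^ j) d)"
  proof
    assume eq: "orb (sB \<circ> aB) ((sB ^^ i) d) = orb (sB \<circ> aB) ((sB ^^ j) d)"
    have "(sB ^^ j) d \<in> orb (sB \<circ> aB) ((sB ^^ i) d)" using eq orb_self by metis
    thus False using sub hne by auto
  qed
qed

end

theorem proposition4:
  fixes D :: "'a set" and sigma alpha :: "'a \<Rightarrow> 'a" and Or :: "'a set"
  assumes "knot_projection_map D sigma alpha"
    and "Or \<in> orbits (traversal sigma alpha) D"
  shows "reduced_map (B_darts D sigma Or) (B_sigma sigma Or) (B_alpha alpha)"
proof -
  interpret kp D sigma alpha Or using assms by unfold_locales
  obtain A :: "'a \<Rightarrow> int" where A: "\<forall>z\<in>D. A (sigma z) = A z + (if z \<in> Or then 1 else -1) \<and> A (sigma (alpha z)) = A z"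
    using alexander by blast
  interpret kpA D sigma alpha Or A using A by unfold_locales
  show ?thesis using reducedA .
qed

end
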